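(* For every integer $b\geq 2$, $$\bar J(b)+\frac{(-1)^{b-1}}{2^b}J(b)=\lambda(b)\ln 2+\sum_{j=1}^{b-2}\frac{(-1)^{j+1}}{2^{j+1}}\lambda(b-j)\zeta(j+1),$$ where an empty sum equals $0$.
   Context: $S_n=1+\frac13+\cdots+\frac{1}{2n-1}$ for $n\geq 1$. For $b>1$, $J(b)=\sum_{n\geq 1}\frac{S_n}{n^b}$ and $\bar J(b)=\sum_{n\geq 1}\frac{S_n}{(2n-1)^b}$. For real $s>1$, $\lambda(s)=\sum_{n\geq 1}\frac{1}{(2n-1)^s}=(1-2^{-s})\zeta(s)$, and $\zeta$ is the Riemann zeta function. *)

theory Defs
  imports "HOL-Analysis.Analysis"
begin

definition S :: "nat \<Rightarrow> real" where
  "S n = (\<Sum>k=1..n. 1 / (2 * real k - 1))"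

definition zeta_real :: "real \<Rightarrow> real" where
  "zeta_real s = (\<Sum>n. 1 / (real (Suc n)) powr s)"

definition dlambda :: "real \<Rightarrow> real" where
  "dlambda s = (1 - 2 powr (-s)) * zeta_real s"

definition J :: "real \<Rightarrow> real" where
  "J b = (\<Sum>n. S (Suc n) / (real (Suc n)) powr b)"

definition Jbar :: "real \<Rightarrow> real" where
  "Jbar b = (\<Sum>n. S (Suc n) / (2 * real (Suc n) - 1) powr b)"

end

theory Submission
  imports Defs "HOL-Real_Asymp.Real_Asymp"
begin


lemma has_sum_sum_fin:
  fixes f :: "'i \<Rightarrow> 'a \<Rightarrow> real"
  assumes "finite I" "\<And>j. j \<in> I \<Longrightarrow> (f j has_sum s j) A"
  shows "((\<lambda>x. \<Sum>j\<in>I. f j x) has_sum (\<Sum>j\<in>I. s j)) A"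
  using assms
proof (induction I rule: finite_induct)
  case empty then show ?case by simp
next
  case (insert i I)
  then show ?case by (simp add: has_sum_add)
qed

lemma has_sum_iter:
  fixes f :: "nat \<times> nat \<Rightarrow> real"
  assumes nn: "\<And>x. f x \<ge> 0" and inner: "\<And>k. (\<lambda>r. f (k,r)) sums g k" and outer: "g sums T"
  shows "(f has_sum T) UNIV"
proof -
  have g0: "g k \<ge> 0" for k
    using inner[of k] nn by (metis sums_unique suminf_nonneg sums_summable)
  have h1: "((\<lambda>r. f (k,r)) has_sum g k) UNIV" for k
    by (rule sums_nonneg_imp_has_sum[OF inner]) (use nn in auto)
  have h2: "(g has_sum T) UNIV" by (rule sums_nonneg_imp_has_sum[OF outer g0])
  have sm: "f summable_on Sigma UNIV (\<lambda>_. UNIV)"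
    by (rule summable_on_SigmaI[OF h1 has_sum_imp_summable[OF h2]]) (use nn in auto)
  have "(f has_sum T) (Sigma UNIV (\<lambda>_. UNIV))" by (rule has_sum_SigmaI[OF h1 h2 sm])
  thus ?thesis by simp
qed

lemma has_sum_iter_swap:
  fixes f :: "nat \<times> nat \<Rightarrow> real"
  assumes nn: "\<And>x. f x \<ge> 0" and inner: "\<And>r. (\<lambda>k. f (k,r)) sums g r" and outer: "g sums T"
  shows "(f has_sum T) UNIV"
proof -
  have "((\<lambda>(r,k). f (k,r)) has_sum T) UNIV"
    by (rule has_sum_iter[where g=g]) (use nn inner outer in auto)
  hence "((\<lambda>(r,k). f (k,r)) has_sum T) (UNIV \<times> UNIV)" by simp
  hence "(f has_sum T) (UNIV \<times> UNIV)" by (subst has_sum_swap) simp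
  thus ?thesis by simp
qed

lemma telesc:
  fixes g :: "nat \<Rightarrow> real"
  assumes "g \<longlonglongrightarrow> 0"
  shows "(\<lambda>k. g k - g (k + m)) sums (\<Sum>k<m. g k)"
proof (induction m)
  case 0 then show ?case by simp
next
  case (Suc m)
  have "(\<lambda>k. g (k + m)) \<longlonglongrightarrow> 0" using assms by (rule LIMSEQ_ignore_initial_segment)
  from telescope_sums'[OF this] have "(\<lambda>k. g (k+m) - g (k + Suc m)) sums g m" by simp
  from sums_add[OF Suc this] show ?case by (simp add: algebra_simps)
qed

lemma S_alt: "S n = (\<Sum>i<n. 1 / (2 * real i + 1))"
  by (induction n) (auto simp: S_def sum.cl_ivl_Suc field_simps)

lemma inv_odd_lim: "(\<lambda>k. 1 / (2 * real k + c)) \<longlonglongrightarrow> 0" if "c > 0" for c :: real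
  using that by real_asymp

lemma L2: "(\<lambda>k. 1 / (2 * real k + 1) - 1 / (2 * real k + 2 * real r + 3)) sums S (Suc r)"
proof -
  have "(\<lambda>k. 1 / (2 * real k + 1) - 1 / (2 * real (k + Suc r) + 1)) sums (\<Sum>k<Suc r. 1 / (2 * real k + 1))"
    by (rule telesc[of "\<lambda>k. 1 / (2 * real k + 1)"]) (rule inv_odd_lim, simp)
  thus ?thesis by (simp add: S_alt algebra_simps)
qed

lemma L1: "(\<lambda>r. 1 / (2 * real r + 2) - 1 / (2 * real r + 2 * real k + 3)) sums (S (Suc k) - ln 2)"
proof -
  have a: "(\<lambda>r. 1 / (2 * real r + 1) - 1 / (2 * real (r + 1) + 1)) sums (\<Sum>k<1. 1 / (2 * real k + 1))"
    by (rule telesc[of "\<lambda>k. 1 / (2 * real k + 1)"]) (rule inv_odd_lim, simp)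
  have b: "(\<lambda>r. 1 / (2 * real r + 1) - 1 / (2 * real r + 2)) sums ln 2"
    using alternating_harmonic_series_sums' by (simp add: divide_inverse add_ac)
  have c: "(\<lambda>r. 1 / (2 * real r + 3) - 1 / (2 * real (r + k) + 3)) sums (\<Sum>i<k. 1 / (2 * real i + 3))"
    by (rule telesc[of "\<lambda>k. 1 / (2 * real k + 3)"]) (rule inv_odd_lim, simp)
  have "(\<Sum>i<k. 1 / (2 * real i + 3)) = S (Suc k) - 1"
    unfolding S_alt by (subst sum.lessThan_Suc_shift) (simp add: add_ac)
  from sums_add[OF sums_diff[OF a b] c] this
  show ?thesis by (simp add: algebra_simps)
qed




lemma S_sqrt: "S n \<le> sqrt (2 * real n)"
proof (induction n)
  case 0 then show ?case by (simp add: S_def)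
next
  case (Suc n)
  show ?case
  proof (cases "n = 0")
    case True then show ?thesis by (simp add: S_def)
  next
    case False
    have Ssuc: "S (Suc n) = S n + 1 / (2 * real n + 1)" by (simp add: S_alt)
    define x where "x = sqrt (2 * real n)"
    define y where "y = sqrt (2 * real n + 2)"
    have x0: "x \<ge> 0" and y0: "y > 0" by (auto simp: x_def y_def)
    have xy: "y * y - x * x = 2" by (simp add: x_def y_def)
    have xley: "x \<le> y" by (simp add: x_def y_def)
    have yle: "y \<le> 2 * real n + 1"
    proof -
      have n1: "real n \<ge> 1" using False by simp
      have "2 * real n + 2 \<le> (2 * real n + 1)^2" using n1 mult_mono[OF n1 n1]
        by (simp add: power2_eq_square algebra_simps)
      thus ?thesis unfolding y_def by (simp add: real_sqrt_le_iff real_le_lsqrt)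
    qed
    have "1 / (2 * real n + 1) \<le> 1 / y" using y0 yle by (simp add: frac_le)
    also have "1 / y \<le> y - x"
    proof -
      have "(y - x) * (y + x) = 2" using xy by (simp add: algebra_simps)
      moreover have "y + x \<le> 2 * y" using xley by simp
      ultimately have "2 \<le> (y - x) * (2 * y)" using xley by (metis diff_ge_0_iff_ge mult_left_mono)
      thus ?thesis using y0 by (simp add: field_simps)
    qed
    finally have "S (Suc n) \<le> x + (y - x)" using Suc.IH Ssuc x_def by linarith
    thus ?thesis by (simp add: y_def algebra_simps)
  qed
qed

lemma S_nonneg: "S n \<ge> 0"
  by (simp add: S_alt sum_nonneg)

lemma summ_base: "summable (\<lambda>n. S (Suc n) / real (Suc n) ^ 2)"
proof (rule summable_comparison_test'[where N=0])
  have "summable (\<lambda>n. real n powr (-3/2))" by (simp add: summable_real_powr_iff)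
  hence "summable (\<lambda>n. real (Suc n) powr (-3/2))" by (subst summable_Suc_iff)
  thus "summable (\<lambda>n. sqrt 2 * real (Suc n) powr (-3/2))" by (rule summable_mult)
  fix n :: nat
  have "S (Suc n) / real (Suc n) ^ 2 \<le> sqrt (2 * real (Suc n)) / real (Suc n) ^ 2"
    using S_sqrt[of "Suc n"] by (simp add: divide_right_mono)
  also have "\<dots> = sqrt 2 * real (Suc n) powr (-3/2)"
  proof -
    have "sqrt (2 * real (Suc n)) = sqrt 2 * real (Suc n) powr (1/2)"
      using real_sqrt_mult[of 2 "real (Suc n)"] powr_half_sqrt[of "real (Suc n)"] by simp
    moreover have "real (Suc n) ^ 2 = real (Suc n) powr 2" by (simp add: powr_realpow)
    moreover have "real (Suc n) powr (1/2) / real (Suc n) powr 2 = real (Suc n) powr (-3/2)"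
      using powr_diff[of "real (Suc n)" "1/2" 2] by simp
    ultimately show ?thesis by (simp only: times_divide_eq_right[symmetric])
  qed
  finally show "norm (S (Suc n) / real (Suc n) ^ 2) \<le> sqrt 2 * real (Suc n) powr (-3/2)"
    using S_nonneg by simp
qed

lemma summ_J: "b \<ge> 2 \<Longrightarrow> summable (\<lambda>n. S (Suc n) / real (Suc n) ^ b)"
proof (rule summable_comparison_test'[OF summ_base, where N=0])
  fix n assume "b \<ge> 2"
  have "real (Suc n) ^ 2 \<le> real (Suc n) ^ b" using \<open>b \<ge> 2\<close> by (intro power_increasing) auto
  thus "norm (S (Suc n) / real (Suc n) ^ b) \<le> S (Suc n) / real (Suc n) ^ 2"
    using S_nonneg by (simp add: frac_le)
qed

lemma summ_Jbar: "b \<ge> 2 \<Longrightarrow> summable (\<lambda>n. S (Suc n) / (2 * real n + 1) ^ b)"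
proof (rule summable_comparison_test'[OF summ_base, where N=0])
  fix n assume "b \<ge> 2"
  have "real (Suc n) ^ 2 \<le> real (Suc n) ^ b" using \<open>b \<ge> 2\<close> by (intro power_increasing) auto
  also have "\<dots> \<le> (2 * real n + 1) ^ b" by (intro power_mono) auto
  finally show "norm (S (Suc n) / (2 * real n + 1) ^ b) \<le> S (Suc n) / real (Suc n) ^ 2"
    using S_nonneg by (simp add: frac_le)
qed

lemma zeta_sums: "m \<ge> 2 \<Longrightarrow> (\<lambda>n. 1 / real (Suc n) ^ m) sums zeta_real (real m)"
proof -
  assume m: "m \<ge> 2"
  have "summable (\<lambda>n. inverse (real n ^ m))" by (rule inverse_power_summable[OF m])
  hence "summable (\<lambda>n. inverse (real (Suc n) ^ m))" by (subst summable_Suc_iff)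
  hence "summable (\<lambda>n. 1 / real (Suc n) ^ m)" by (simp add: divide_inverse)
  moreover have "zeta_real (real m) = (\<Sum>n. 1 / real (Suc n) ^ m)"
    unfolding zeta_real_def by (simp add: powr_realpow)
  ultimately show ?thesis by (simp add: summable_sums)
qed

lemma lambda_sums: "m \<ge> 2 \<Longrightarrow> (\<lambda>k. 1 / (2 * real k + 1) ^ m) sums dlambda (real m)"
proof -
  assume m: "m \<ge> 2"
  define f where "f = (\<lambda>n. 1 / real (Suc n) ^ m)"
  have z: "f sums zeta_real (real m)" using zeta_sums[OF m] by (simp add: f_def)
  from sums_group[OF z, of 2] have g: "(\<lambda>k. f (2*k) + f (2*k+1)) sums zeta_real (real m)"
    by (simp add: mult.commute)
  have "(\<lambda>k. (1/2)^m * f k) sums ((1/2)^m * zeta_real (real m))" by (rule sums_mult[OF z])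
  moreover have "(1/2)^m * f k = f (2*k+1)" for k
  proof -
    have e: "real (Suc (2*k+1)) = 2 * real (Suc k)" by simp
    show ?thesis unfolding f_def e power_mult_distrib by (simp add: power_one_over)
  qed
  ultimately have o: "(\<lambda>k. f (2*k+1)) sums ((1/2)^m * zeta_real (real m))" by simp
  from sums_diff[OF g o] have "(\<lambda>k. f (2*k)) sums (zeta_real (real m) - (1/2)^m * zeta_real (real m))" by simp
  moreover have "(\<lambda>k. f (2*k)) = (\<lambda>k. 1 / (2 * real k + 1) ^ m)" by (auto simp: f_def add_ac)
  moreover have "zeta_real (real m) - (1/2)^m * zeta_real (real m) = dlambda (real m)"
  proof -
    have "2 powr (- real m) = (1/2)^m" by (simp add: powr_minus powr_realpow power_one_over inverse_eq_divide)
    thus ?thesis by (simp add: dlambda_def left_diff_distrib)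
  qed
  ultimately show ?thesis by simp
qed




lemma aux: "\<lbrakk>(p::real) > 0; d > 0; X > 0; q > 0; q = p + d\<rbrakk> \<Longrightarrow> s/(p^2*(X*d*d)) - s/(p*(X*d)*q)/p = s/(p*(X*d*d)*q)"
proof -
  assume a: "(p::real) > 0" "d > 0" "X > 0" "q > 0" "q = p + d"
  have "s/(p^2*(X*d*d)) - s/(p*(X*d)*q)/p = s * (q - d) / (p^2 * X * d * d * q)"
    using a(1-4) by (simp add: field_simps power2_eq_square)
  also have "\<dots> = s/(p*(X*d*d)*q)" using a(1) by (simp add: a(5) power2_eq_square)
  finally show ?thesis .
qed

lemma ident0:
  fixes p d q :: real
  assumes p: "p > 0" and d: "d > 0" and q: "q = p + d"
  shows "(\<Sum>j=1..m. (-1)^(j+1) / (p^(m+2-j) * d^(j+1)))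
         = 1 / (p^(m+1) * d * q) - (-1)^m / (p * d^(m+1) * q)"
proof (induction m)
  case 0 then show ?case using p d by simp
next
  case (Suc m)
  have q0: "q > 0" using p d q by simp
  have e1: "(\<Sum>j=1..Suc m. (-1)^(j+1) / (p^(Suc m+2-j) * d^(j+1)))
      = (\<Sum>j=1..m. (-1)^(j+1) / (p^(Suc m+2-j) * d^(j+1))) + (-1)^m / (p^2 * d^(m+2))"
    by (simp add: sum.cl_ivl_Suc numeral_2_eq_2)
  have e2: "(\<Sum>j=1..m. (-1)^(j+1) / (p^(Suc m+2-j) * d^(j+1)))
      = (\<Sum>j=1..m. (-1)^(j+1) / (p^(m+2-j) * d^(j+1))) / p"
    unfolding sum_divide_distrib
  proof (rule sum.cong)
    fix j assume "j \<in> {1..m}"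
    hence "Suc m + 2 - j = Suc (m + 2 - j)" by auto
    thus "(-1)^(j+1) / (p^(Suc m+2-j) * d^(j+1)) = (-1)^(j+1) / (p^(m+2-j) * d^(j+1)) / p"
      by (simp add: field_simps)
  qed simp
  have a: "(-1)^m/(p^2*(d^m*d*d)) - (-1)^m/(p*(d^m*d)*q)/p = (-1)^m/(p*(d^m*d*d)*q)"
    by (rule aux[OF p d _ q0 q]) (use d in simp)
  have b: "1 / (p^(m+1) * d * q) / p = 1 / (p^(Suc m+1) * d * q)" by simp
  have c: "d^(m+2) = d^m*d*d" "d^(m+1) = d^m*d" "d^(Suc m+1) = d^m*d*d" by (simp_all add: algebra_simps)
  have b': "1/(p*p^m*d*q*p) = 1/(p*(p*p^m)*d*q)" by (simp add: mult_ac)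
  show ?case unfolding e1 e2 Suc.IH using a b unfolding c apply (simp add: diff_divide_distrib)
    using b' by linarith
qed




theorem mainTheorem9:
  fixes b :: nat
  assumes "b \<ge> 2"
  shows "Jbar (real b) + (-1) ^ (b - 1) / 2 ^ b * J (real b)
         = dlambda (real b) * ln 2
           + (\<Sum>j=1..b-2. (-1) ^ (j + 1) / 2 ^ (j + 1)
                * dlambda (real (b - j)) * zeta_real (real (j + 1)))"
proof -
  obtain m where bm: "b = m + 2" using assms by (metis add.commute le_Suc_ex)
  define P where "P = (\<lambda>k::nat. 2 * real k + 1)"
  define D where "D = (\<lambda>r::nat. 2 * real r + 2)"
  have P0: "P k > 0" for k by (simp add: P_def)
  have D0: "D r > 0" for r by (simp add: D_def)
  define t where "t = (\<lambda>j (x::nat\<times>nat). 1 / (P (fst x) ^ (b-j) * D (snd x) ^ (j+1)))"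
  define a where "a = (\<lambda>x::nat\<times>nat. 1 / (P (fst x) ^ (b-1) * D (snd x) * (P (fst x) + D (snd x))))"
  define c where "c = (\<lambda>x::nat\<times>nat. 1 / (P (fst x) * D (snd x) ^ (b-1) * (P (fst x) + D (snd x))))"
  define Z where "Z = (\<lambda>j::nat. zeta_real (real (j+1)) / 2^(j+1))"
  have T: "(t j has_sum dlambda (real (b-j)) * Z j) UNIV" if j: "j \<in> {1..b-2}" for j
  proof (rule has_sum_iter[where g = "\<lambda>k. 1 / P k ^ (b-j) * Z j"])
    show "t j x \<ge> 0" for x using P0[of "fst x"] D0[of "snd x"] by (simp add: t_def)
    have zs: "(\<lambda>r. 1 / D r ^ (j+1)) sums Z j"
    proof -
      have "(\<lambda>r. (1/2)^(j+1) * (1 / real (Suc r) ^ (j+1))) sums ((1/2)^(j+1) * zeta_real (real (j+1)))"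
        by (rule sums_mult[OF zeta_sums]) (use j in auto)
      moreover have "(1/2)^(j+1) * (1 / real (Suc r) ^ (j+1)) = 1 / D r ^ (j+1)" for r
      proof -
        have e: "D r = 2 * real (Suc r)" by (simp add: D_def)
        show ?thesis unfolding e power_mult_distrib by (simp add: power_one_over)
      qed
      ultimately have "(\<lambda>r. 1 / D r ^ (j+1)) sums ((1/2)^(j+1) * zeta_real (real (j+1)))"
        by (metis (no_types, lifting) sums_cong)
      moreover have "(1/2::real)^(j+1) * zeta_real (real (j+1)) = Z j" by (simp add: Z_def power_one_over)
      ultimately show ?thesis by simp
    qed
    show "(\<lambda>r. t j (k, r)) sums (1 / P k ^ (b-j) * Z j)" for k
      using sums_mult[OF zs, of "1 / P k ^ (b-j)"] by (simp add: t_def)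
    have "(\<lambda>k. 1 / P k ^ (b-j)) sums dlambda (real (b-j))"
      unfolding P_def by (rule lambda_sums) (use j in auto)
    thus "(\<lambda>k. 1 / P k ^ (b-j) * Z j) sums (dlambda (real (b-j)) * Z j)" by (rule sums_mult2)
  qed
  have Jbar_eq: "Jbar (real b) = (\<Sum>n. S (Suc n) / P n ^ b)"
    unfolding Jbar_def P_def by (simp add: powr_realpow add_pos_pos) (simp add: add_ac)
  have Asum: "(a has_sum (Jbar (real b) - ln 2 * dlambda (real b))) UNIV"
  proof (rule has_sum_iter[where g = "\<lambda>k. S (Suc k) / P k ^ b - ln 2 * (1 / P k ^ b)"])
    show "a x \<ge> 0" for x using P0[of "fst x"] D0[of "snd x"] by (simp add: a_def)
    show "(\<lambda>r. a (k, r)) sums (S (Suc k) / P k ^ b - ln 2 * (1 / P k ^ b))" for k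
    proof -
      have "(\<lambda>r. 1 / P k ^ b * (1 / (2 * real r + 2) - 1 / (2 * real r + 2 * real k + 3)))
              sums (1 / P k ^ b * (S (Suc k) - ln 2))"
        by (rule sums_mult[OF L1])
      moreover have "1 / P k ^ b * (1 / (2 * real r + 2) - 1 / (2 * real r + 2 * real k + 3)) = a (k, r)" for r
      proof -
        have e: "2 * real r + 2 * real k + 3 = P k + D r" by (simp add: P_def D_def)
        have "1 / D r - 1 / (P k + D r) = P k / (D r * (P k + D r))"
          using P0[of k] D0[of r] by (simp add: field_simps add_pos_pos)
        moreover have "P k ^ b = P k * P k ^ (b-1)" using power_Suc[of "P k" "b-1"] bm by simp
        moreover have e2: "2 * real r + 2 = D r" by (simp add: D_def)
        moreover have "P k + D r > 0" using P0[of k] D0[of r] by simp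
        ultimately show ?thesis unfolding e e2 a_def using P0[of k] D0[of r]
          by (simp add: field_simps)
      qed
      ultimately have "(\<lambda>r. a (k, r)) sums (1 / P k ^ b * (S (Suc k) - ln 2))"
        by (metis (no_types, lifting) sums_cong)
      moreover have "1 / P k ^ b * (S (Suc k) - ln 2) = S (Suc k) / P k ^ b - ln 2 * (1 / P k ^ b)"
        by (simp add: right_diff_distrib)
      ultimately show ?thesis by simp
    qed
    have "(\<lambda>n. S (Suc n) / P n ^ b) sums Jbar (real b)"
      unfolding Jbar_eq using summ_Jbar[OF assms] by (simp add: P_def summable_sums)
    moreover have "(\<lambda>n. 1 / P n ^ b) sums dlambda (real b)"
      using lambda_sums[OF assms] by (simp add: P_def)
    ultimately show "(\<lambda>k. S (Suc k) / P k ^ b - ln 2 * (1 / P k ^ b)) sums (Jbar (real b) - ln 2 * dlambda (real b))"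
      by (intro sums_diff sums_mult)
  qed
  have Csum: "(c has_sum J (real b) / 2 ^ b) UNIV"
  proof (rule has_sum_iter_swap[where g = "\<lambda>r. S (Suc r) / D r ^ b"])
    show "c x \<ge> 0" for x using P0[of "fst x"] D0[of "snd x"] by (simp add: c_def)
    show "(\<lambda>k. c (k, r)) sums (S (Suc r) / D r ^ b)" for r
    proof -
      have "(\<lambda>k. 1 / D r ^ b * (1 / (2 * real k + 1) - 1 / (2 * real k + 2 * real r + 3)))
              sums (1 / D r ^ b * S (Suc r))"
        by (rule sums_mult[OF L2])
      moreover have "1 / D r ^ b * (1 / (2 * real k + 1) - 1 / (2 * real k + 2 * real r + 3)) = c (k, r)" for k
      proof -
        have e: "2 * real k + 2 * real r + 3 = P k + D r" by (simp add: P_def D_def)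
        have "1 / P k - 1 / (P k + D r) = D r / (P k * (P k + D r))"
          using P0[of k] D0[of r] by (simp add: field_simps add_pos_pos)
        moreover have "D r ^ b = D r * D r ^ (b-1)" using power_Suc[of "D r" "b-1"] bm by simp
        moreover have e2: "2 * real k + 1 = P k" by (simp add: P_def)
        moreover have "P k + D r > 0" using P0[of k] D0[of r] by simp
        ultimately show ?thesis unfolding e e2 c_def using P0[of k] D0[of r]
          by (simp add: field_simps)
      qed
      ultimately show ?thesis by simp
    qed
    have "(\<lambda>n. S (Suc n) / real (Suc n) ^ b) sums J (real b)"
      unfolding J_def using summ_J[OF assms] by (simp add: powr_realpow summable_sums)
    from sums_mult[OF this, of "1 / 2^b"]
    have "(\<lambda>n. 1 / 2^b * (S (Suc n) / real (Suc n) ^ b)) sums (1 / 2^b * J (real b))" .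
    moreover have "1 / 2^b * (S (Suc n) / real (Suc n) ^ b) = S (Suc n) / D n ^ b" for n
    proof -
      have e: "D n = 2 * real (Suc n)" by (simp add: D_def)
      show ?thesis unfolding e power_mult_distrib by simp
    qed
    ultimately have "(\<lambda>r. S (Suc r) / D r ^ b) sums (1 / 2^b * J (real b))"
      by (metis (no_types, lifting) sums_cong)
    thus "(\<lambda>r. S (Suc r) / D r ^ b) sums (J (real b) / 2 ^ b)" by simp
  qed
  have F1: "((\<lambda>x. \<Sum>j\<in>{1..b-2}. (-1)^(j+1) * t j x) has_sum
             (\<Sum>j\<in>{1..b-2}. (-1)^(j+1) * (dlambda (real (b-j)) * Z j))) UNIV"
    by (rule has_sum_sum_fin) (simp, rule has_sum_cmult_right[OF T])
  have F2: "((\<lambda>x. a x + (- ((-1)^b)) * c x) has_sum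
             ((Jbar (real b) - ln 2 * dlambda (real b)) + (- ((-1)^b)) * (J (real b) / 2 ^ b))) UNIV"
    by (intro has_sum_add has_sum_cmult_right Asum Csum)
  have pw: "(\<Sum>j\<in>{1..b-2}. (-1)^(j+1) * t j x) = a x + (- ((-1)^b)) * c x" for x
  proof -
    have "(\<Sum>j\<in>{1..b-2}. (-1)^(j+1) * t j x)
        = (\<Sum>j=1..m. (-1)^(j+1) / (P (fst x)^(m+2-j) * D (snd x)^(j+1)))"
      by (simp add: t_def bm)
    also have "\<dots> = 1 / (P (fst x)^(m+1) * D (snd x) * (P (fst x) + D (snd x)))
                    - (-1)^m / (P (fst x) * D (snd x)^(m+1) * (P (fst x) + D (snd x)))"
      by (rule ident0[OF P0 D0 refl])
    also have "\<dots> = a x + (- ((-1)^b)) * c x"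
      by (simp add: a_def c_def bm)
    finally show ?thesis .
  qed
  have eq: "(\<Sum>j\<in>{1..b-2}. (-1)^(j+1) * (dlambda (real (b-j)) * Z j))
        = (Jbar (real b) - ln 2 * dlambda (real b)) + (- ((-1)^b)) * (J (real b) / 2 ^ b)"
    using has_sum_unique[OF F1 F2[folded pw]] .
  have sgn: "(-1::real) ^ (b - 1) = - ((-1)^b)" using bm by simp
  have "(\<Sum>j=1..b-2. (-1) ^ (j + 1) / 2 ^ (j + 1) * dlambda (real (b - j)) * zeta_real (real (j + 1)))
      = (\<Sum>j\<in>{1..b-2}. (-1)^(j+1) * (dlambda (real (b-j)) * Z j))"
    by (rule sum.cong) (simp_all add: Z_def)
  moreover have "(-1) ^ (b - 1) / 2 ^ b * J (real b) = (- ((-1)^b)) * (J (real b) / 2 ^ b)"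
    using sgn by simp
  ultimately show ?thesis using eq by (simp add: mult.commute)
qed


end
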